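(* In the setting described in the context, for the family of output states $|\psi_\theta\rangle=U^n_\theta\cdots U^1_\theta|\psi_{sep}\rangle$ the SLD quantum information $H_\theta$ is attainable: at each $\theta$ there is a POVM $M$ whose Fisher information matrix equals $H_\theta$.
   Context: Let $t_1,\dots,t_{d-1}$ be $d\times d$ matrices with $t_k=t_k^\dagger$, $\mathrm{tr}\{t_k\}=0$, $\mathrm{tr}\{t_kt_l\}=\delta_{kl}$ and $t_kt_l=t_lt_k$; let $\{|w_k\rangle\}$ be a common orthonormal eigenbasis and $|\psi_{sep}\rangle=\frac1{\sqrt d}\sum_{k=1}^d|w_k\rangle$. Let $f_1,\dots,f_n:\mathbb{R}\to\mathbb{R}$ be differentiable with $f_j'>0$ and $0\le\sum_jf_j(\theta_k)\le\pi$. For $\theta=(\theta_1,\dots,\theta_{d-1})$, $U^j_\theta=\exp\bigl(i\sum_{k=1}^{d-1}f_j(\theta_k)t_k\bigr)$. SLD quantum information: $(H_\theta)_{jk}=\mathrm{Re}\,\mathrm{tr}\{\lambda^j\rho_\theta\lambda^k\}$ with $\rho_\theta=|\psi_\theta\rangle\langle\psi_\theta|$ and $\lambda^j$ Hermitian solving $\frac{\partial\rho_\theta}{\partial\theta_j}=\frac12(\rho_\theta\lambda^j+\lambda^j\rho_\theta)$. For a POVM $M=\{M_m\}$ with $p(m;\theta)=\mathrm{tr}\{\rho_\theta M_m\}$, the Fisher information matrix is $\sum_{m:p>0}\frac1{p(m;\theta)}\partial_jp(m;\theta)\partial_kp(m;\theta)$. *)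

theory Defs
  imports "HOL-Analysis.Derivative" "Jordan_Normal_Form.Matrix"
begin

definition cadj :: "complex mat \<Rightarrow> complex mat" where
  "cadj A = mat (dim_col A) (dim_row A) (\<lambda>(i,j). cnj (A $$ (j,i)))"

definition hermitian :: "complex mat \<Rightarrow> bool" where
  "hermitian A \<longleftrightarrow> dim_row A = dim_col A \<and> cadj A = A"

definition mtrace :: "complex mat \<Rightarrow> complex" where
  "mtrace A = (\<Sum>i<dim_row A. A $$ (i,i))"

definition cinner :: "complex vec \<Rightarrow> complex vec \<Rightarrow> complex" where
  "cinner u v = (\<Sum>i<dim_vec u. cnj (u $ i) * v $ i)"

definition mexp :: "complex mat \<Rightarrow> complex mat" where
  "mexp A = mat (dim_row A) (dim_col A)
     (\<lambda>(i,j). \<Sum>k. (A ^\<^sub>m k) $$ (i,j) / of_nat (fact k))"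

definition psd :: "nat \<Rightarrow> complex mat \<Rightarrow> bool" where
  "psd d M \<longleftrightarrow> M \<in> carrier_mat d d \<and> hermitian M \<and>
     (\<forall>v \<in> carrier_vec d. 0 \<le> Re (cinner v (M *\<^sub>v v)))"

definition is_povm :: "nat \<Rightarrow> nat \<Rightarrow> (nat \<Rightarrow> complex mat) \<Rightarrow> bool" where
  "is_povm d N M \<longleftrightarrow> (\<forall>m<N. psd d (M m)) \<and>
     (\<forall>a<d. \<forall>b<d. (\<Sum>m<N. M m $$ (a,b)) = (1\<^sub>m d) $$ (a,b))"

text \<open>Parameters theta_1..theta_{d-1} are encoded as theta k, k < d-1 (0-based);
  generators t_1..t_{d-1} as t k, k < d-1; functions f_1..f_n as f j, j < n.\<close>

definition psi_sep :: "nat \<Rightarrow> (nat \<Rightarrow> complex vec) \<Rightarrow> complex vec" where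
  "psi_sep d w = vec d (\<lambda>i. (\<Sum>a<d. w a $ i) / complex_of_real (sqrt (real d)))"

definition Ugate :: "nat \<Rightarrow> (nat \<Rightarrow> complex mat) \<Rightarrow> (real \<Rightarrow> real) \<Rightarrow> (nat \<Rightarrow> real) \<Rightarrow> complex mat" where
  "Ugate d t fj \<theta> = mexp (mat d d (\<lambda>(a,b). \<i> * (\<Sum>k<d-1. complex_of_real (fj (\<theta> k)) * t k $$ (a,b))))"

fun circuit :: "nat \<Rightarrow> (nat \<Rightarrow> complex mat) \<Rightarrow> (nat \<Rightarrow> real \<Rightarrow> real) \<Rightarrow> nat \<Rightarrow> (nat \<Rightarrow> real) \<Rightarrow> complex mat" where
  "circuit d t f 0 \<theta> = 1\<^sub>m d"
| "circuit d t f (Suc j) \<theta> = Ugate d t (f j) \<theta> * circuit d t f j \<theta>"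

definition psi_out :: "nat \<Rightarrow> nat \<Rightarrow> (nat \<Rightarrow> complex mat) \<Rightarrow> (nat \<Rightarrow> complex vec)
    \<Rightarrow> (nat \<Rightarrow> real \<Rightarrow> real) \<Rightarrow> (nat \<Rightarrow> real) \<Rightarrow> complex vec" where
  "psi_out d n t w f \<theta> = circuit d t f n \<theta> *\<^sub>v psi_sep d w"

definition proj :: "nat \<Rightarrow> complex vec \<Rightarrow> complex mat" where
  "proj d \<psi> = mat d d (\<lambda>(a,b). \<psi> $ a * cnj (\<psi> $ b))"

definition rho_out :: "nat \<Rightarrow> nat \<Rightarrow> (nat \<Rightarrow> complex mat) \<Rightarrow> (nat \<Rightarrow> complex vec)
    \<Rightarrow> (nat \<Rightarrow> real \<Rightarrow> real) \<Rightarrow> (nat \<Rightarrow> real) \<Rightarrow> complex mat" where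
  "rho_out d n t w f \<theta> = proj d (psi_out d n t w f \<theta>)"

definition is_SLD :: "nat \<Rightarrow> nat \<Rightarrow> ((nat \<Rightarrow> real) \<Rightarrow> complex mat) \<Rightarrow> (nat \<Rightarrow> complex mat)
    \<Rightarrow> (nat \<Rightarrow> real) \<Rightarrow> bool" where
  "is_SLD d p \<rho> lam \<theta> \<longleftrightarrow> (\<forall>j<p. lam j \<in> carrier_mat d d \<and> hermitian (lam j) \<and>
     (\<forall>a<d. \<forall>b<d. ((\<lambda>s. \<rho> (\<theta>(j := s)) $$ (a,b)) has_vector_derivative
         ((1/2) * ((\<rho> \<theta> * lam j + lam j * \<rho> \<theta>) $$ (a,b)))) (at (\<theta> j))))"

definition sld_info :: "((nat \<Rightarrow> real) \<Rightarrow> complex mat) \<Rightarrow> (nat \<Rightarrow> complex mat)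
    \<Rightarrow> (nat \<Rightarrow> real) \<Rightarrow> nat \<Rightarrow> nat \<Rightarrow> real" where
  "sld_info \<rho> lam \<theta> j k = Re (mtrace (lam j * \<rho> \<theta> * lam k))"

definition outcome_prob :: "((nat \<Rightarrow> real) \<Rightarrow> complex mat) \<Rightarrow> (nat \<Rightarrow> complex mat)
    \<Rightarrow> nat \<Rightarrow> (nat \<Rightarrow> real) \<Rightarrow> real" where
  "outcome_prob \<rho> M m \<theta> = Re (mtrace (\<rho> \<theta> * M m))"

definition partial_prob :: "((nat \<Rightarrow> real) \<Rightarrow> complex mat) \<Rightarrow> (nat \<Rightarrow> complex mat)
    \<Rightarrow> nat \<Rightarrow> (nat \<Rightarrow> real) \<Rightarrow> nat \<Rightarrow> real" where
  "partial_prob \<rho> M m \<theta> j = deriv (\<lambda>s. outcome_prob \<rho> M m (\<theta>(j := s))) (\<theta> j)"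

definition fisher_info :: "((nat \<Rightarrow> real) \<Rightarrow> complex mat) \<Rightarrow> nat \<Rightarrow> (nat \<Rightarrow> complex mat)
    \<Rightarrow> (nat \<Rightarrow> real) \<Rightarrow> nat \<Rightarrow> nat \<Rightarrow> real" where
  "fisher_info \<rho> N M \<theta> j k =
     (\<Sum>m\<in>{m. m < N \<and> outcome_prob \<rho> M m \<theta> > 0}.
        partial_prob \<rho> M m \<theta> j * partial_prob \<rho> M m \<theta> k / outcome_prob \<rho> M m \<theta>)"

end

theory Submission imports Defs "Jordan_Normal_Form.Determinant" begin

lemma mult_entry:
  assumes "A \<in> carrier_mat n m" "B \<in> carrier_mat m p" "i < n" "j < p"
  shows "(A * B) $$ (i,j) = (\<Sum>k<m. A $$ (i,k) * B $$ (k,j))"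
  using assms by (auto simp: scalar_prod_def atLeast0LessThan intro!: sum.cong)

lemma mult_vec_entry:
  assumes "A \<in> carrier_mat n m" "v \<in> carrier_vec m" "i < n"
  shows "(A *\<^sub>v v) $ i = (\<Sum>k<m. A $$ (i,k) * v $ k)"
  using assms by (auto simp: scalar_prod_def atLeast0LessThan intro!: sum.cong)

lemma herm_entry:
  assumes "hermitian A" "A \<in> carrier_mat n n" "i < n" "j < n"
  shows "A $$ (i,j) = cnj (A $$ (j,i))"
proof -
  have "A $$ (i,j) = cadj A $$ (i,j)" using assms unfolding hermitian_def by simp
  also have "\<dots> = cnj (A $$ (j,i))" using assms unfolding cadj_def by simp
  finally show ?thesis .
qed

lemma sum_delta_r: "x < (d::nat) \<Longrightarrow> (\<Sum>y<d. g y * (if y = x then 1 else 0)) = (g x :: 'a::semiring_1)"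
proof -
  assume x: "x < d"
  have "(\<Sum>y<d. g y * (if y = x then 1 else 0)) = (\<Sum>y<d. if y = x then g y else 0)"
    by (rule sum.cong) auto
  also have "\<dots> = g x" using x by (subst sum.delta) auto
  finally show ?thesis .
qed

lemma sum_delta_l: "x < (d::nat) \<Longrightarrow> (\<Sum>y<d. g y * (if x = y then 1 else 0)) = (g x :: 'a::semiring_1)"
  using sum_delta_r[of x d g] by (simp add: eq_commute)

lemma sum_delta_l2: "x < (d::nat) \<Longrightarrow> (\<Sum>y<d. (if x = y then 1 else 0) * g y) = (g x :: 'a::semiring_1)"
proof -
  assume x: "x < d"
  have "(\<Sum>y<d. (if x = y then 1 else 0) * g y) = (\<Sum>y<d. g y * (if x = y then 1 else 0))"
    by (rule sum.cong) auto
  thus ?thesis using sum_delta_l[OF x] by simp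
qed

lemma complete:
  fixes V :: "nat \<Rightarrow> complex vec"
  assumes car: "\<forall>a<d. V a \<in> carrier_vec d"
    and orth: "\<forall>a<d. \<forall>b<d. cinner (V a) (V b) = (if a = b then 1 else 0)"
    and xy: "x < d" "y < d"
  shows "(\<Sum>a<d. V a $ x * cnj (V a $ y)) = (if x = y then 1 else 0)"
proof -
  define W where "W = mat d d (\<lambda>(x,a). V a $ x)"
  define Wh where "Wh = mat d d (\<lambda>(a,x). cnj (V a $ x))"
  have W: "W \<in> carrier_mat d d" and Wh: "Wh \<in> carrier_mat d d" unfolding W_def Wh_def by auto
  have "Wh * W = 1\<^sub>m d"
  proof (rule eq_matI)
    fix i j assume ij: "i < dim_row (1\<^sub>m d)" "j < dim_col (1\<^sub>m d)"
    have "(Wh * W) $$ (i,j) = (\<Sum>k<d. cnj (V i $ k) * V j $ k)"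
      using ij by (subst mult_entry[OF Wh W]) (auto simp: W_def Wh_def)
    also have "\<dots> = cinner (V i) (V j)" unfolding cinner_def using car ij by auto
    also have "\<dots> = 1\<^sub>m d $$ (i,j)" using orth ij by auto
    finally show "(Wh * W) $$ (i,j) = 1\<^sub>m d $$ (i,j)" .
  qed (auto simp: W_def Wh_def)
  hence "W * Wh = 1\<^sub>m d" using mat_mult_left_right_inverse[OF Wh W] by simp
  hence "(W * Wh) $$ (x,y) = (if x = y then 1 else 0)" using xy by simp
  moreover have "(W * Wh) $$ (x,y) = (\<Sum>a<d. V a $ x * cnj (V a $ y))"
    using xy by (subst mult_entry[OF W Wh]) (auto simp: W_def Wh_def)
  ultimately show ?thesis by simp
qed


lemma pair_sum: "(\<Sum>m<2*(N::nat). F m) = (\<Sum>k<N. F (2*k) + F (2*k+1))"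
  by (induction N) (simp_all add: algebra_simps)

locale qs =
  fixes d :: nat and t :: "nat \<Rightarrow> complex mat" and w :: "nat \<Rightarrow> complex vec"
  assumes d_pos: "0 < d"
    and t_herm: "\<forall>k<d-1. t k \<in> carrier_mat d d \<and> hermitian (t k) \<and> mtrace (t k) = 0"
    and t_orth: "\<forall>k<d-1. \<forall>l<d-1. mtrace (t k * t l) = (if k = l then 1 else 0)"
    and w_carrier: "\<forall>a<d. w a \<in> carrier_vec d"
    and w_orthonormal: "\<forall>a<d. \<forall>b<d. cinner (w a) (w b) = (if a = b then 1 else 0)"
    and w_eigen: "\<forall>k<d-1. \<forall>a<d. \<exists>c. t k *\<^sub>v w a = c \<cdot>\<^sub>v w a"
begin

definition tau :: "nat \<Rightarrow> nat \<Rightarrow> real" where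
  "tau k a = Re (cinner (w a) (t k *\<^sub>v w a))"

lemma wdim[simp]: "a < d \<Longrightarrow> dim_vec (w a) = d"
  using w_carrier by auto

lemma worth: "a < d \<Longrightarrow> b < d \<Longrightarrow> (\<Sum>x<d. cnj (w a $ x) * w b $ x) = (if a = b then 1 else 0)"
  using w_orthonormal unfolding cinner_def by auto

lemma wcomplete: "x < d \<Longrightarrow> y < d \<Longrightarrow> (\<Sum>a<d. w a $ x * cnj (w a $ y)) = (if x = y then 1 else 0)"
  using complete[OF w_carrier w_orthonormal] by blast

lemma eig_entry:
  assumes k: "k < d-1" and a: "a < d" and x: "x < d"
  shows "(\<Sum>y<d. t k $$ (x,y) * w a $ y) = of_real (tau k a) * w a $ x"
proof -
  have T: "t k \<in> carrier_mat d d" "hermitian (t k)" using t_herm k by auto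
  obtain c where c: "t k *\<^sub>v w a = c \<cdot>\<^sub>v w a" using w_eigen k a by blast
  have ent: "(\<Sum>y<d. t k $$ (x,y) * w a $ y) = c * w a $ x" if "x < d" for x
  proof -
    have "(t k *\<^sub>v w a) $ x = c * w a $ x" using c that a by simp
    thus ?thesis using mult_vec_entry[OF T(1) _ that] w_carrier a by simp
  qed
  define S where "S = (\<Sum>x<d. cnj (w a $ x) * (\<Sum>y<d. t k $$ (x,y) * w a $ y))"
  have mv: "(t k *\<^sub>v w a) $ x = (\<Sum>y<d. t k $$ (x,y) * w a $ y)" if "x < d" for x
    using mult_vec_entry[OF T(1) _ that] w_carrier a by simp
  have "cinner (w a) (t k *\<^sub>v w a) = S"
    unfolding cinner_def S_def using a
    by (auto intro!: sum.cong simp: mv)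
  have Sc: "S = c"
  proof -
    have "S = (\<Sum>x<d. c * (cnj (w a $ x) * w a $ x))" unfolding S_def
      by (rule sum.cong) (auto simp: ent)
    also have "\<dots> = c" using worth[OF a a] by (simp add: sum_distrib_left[symmetric])
    finally show ?thesis .
  qed
  have hc: "cnj (t k $$ (x,y)) = t k $$ (y,x)" if "x < d" "y < d" for x y
    using herm_entry[OF T(2) T(1) that(2) that(1)] by simp
  have "cnj S = (\<Sum>x<d. \<Sum>y<d. w a $ x * (t k $$ (y,x) * cnj (w a $ y)))"
    unfolding S_def by (auto simp: sum_distrib_left hc intro!: sum.cong)
  also have "\<dots> = (\<Sum>y<d. \<Sum>x<d. w a $ x * (t k $$ (y,x) * cnj (w a $ y)))"
    by (rule sum.swap)
  also have "\<dots> = S" unfolding S_def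
    by (auto simp: sum_distrib_left intro!: sum.cong)
  finally have "cnj c = c" using Sc by simp
  hence "Im (cnj c) = Im c" by simp
  hence "Im c = 0" by simp
  hence "c = of_real (Re c)" by (simp add: complex_eq_iff)
  moreover have "tau k a = Re c" unfolding tau_def using \<open>cinner _ _ = S\<close> Sc by simp
  ultimately show ?thesis using ent[OF x] by simp
qed

lemma left_eig:
  assumes k: "k < d-1" and a: "a < d" and y: "y < d"
  shows "(\<Sum>z<d. cnj (w a $ z) * t k $$ (z,y)) = of_real (tau k a) * cnj (w a $ y)"
proof -
  have T: "t k \<in> carrier_mat d d" "hermitian (t k)" using t_herm k by auto
  have hc: "t k $$ (z,y) = cnj (t k $$ (y,z))" if "z < d" for z
    using herm_entry[OF T(2) T(1) that y] by simp
  have "(\<Sum>z<d. cnj (w a $ z) * t k $$ (z,y)) = cnj (\<Sum>z<d. t k $$ (y,z) * w a $ z)"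
    by (auto intro!: sum.cong simp: hc mult.commute)
  also have "\<dots> = of_real (tau k a) * cnj (w a $ y)" using eig_entry[OF k a y] by simp
  finally show ?thesis .
qed

lemma trace_eig:
  assumes A: "A \<in> carrier_mat d d"
    and ev: "\<And>a x. a < d \<Longrightarrow> x < d \<Longrightarrow> (\<Sum>y<d. A $$ (x,y) * w a $ y) = \<mu> a * w a $ x"
  shows "mtrace A = (\<Sum>a<d. \<mu> a)"
proof -
  have "mtrace A = (\<Sum>x<d. \<Sum>y<d. A $$ (x,y) * (if y = x then 1 else 0))"
    unfolding mtrace_def using A by (auto intro!: sum.cong simp: sum_delta_r)
  also have "\<dots> = (\<Sum>x<d. \<Sum>y<d. A $$ (x,y) * (\<Sum>a<d. w a $ y * cnj (w a $ x)))"
    by (auto intro!: sum.cong simp: wcomplete)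
  also have "\<dots> = (\<Sum>x<d. \<Sum>y<d. \<Sum>a<d. cnj (w a $ x) * (A $$ (x,y) * w a $ y))"
    by (auto intro!: sum.cong simp: sum_distrib_left ac_simps)
  also have "\<dots> = (\<Sum>x<d. \<Sum>a<d. \<Sum>y<d. cnj (w a $ x) * (A $$ (x,y) * w a $ y))"
    by (rule sum.cong[OF refl], rule sum.swap)
  also have "\<dots> = (\<Sum>x<d. \<Sum>a<d. cnj (w a $ x) * (\<Sum>y<d. A $$ (x,y) * w a $ y))"
    by (simp add: sum_distrib_left)
  also have "\<dots> = (\<Sum>a<d. \<Sum>x<d. cnj (w a $ x) * (\<mu> a * w a $ x))"
    by (subst sum.swap) (auto intro!: sum.cong simp: ev)
  also have "\<dots> = (\<Sum>a<d. \<mu> a * (\<Sum>x<d. cnj (w a $ x) * w a $ x))"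
    by (auto intro!: sum.cong simp: ac_simps sum_distrib_left)
  also have "\<dots> = (\<Sum>a<d. \<mu> a)"
    by (auto intro!: sum.cong simp: worth)
  finally show ?thesis .
qed

lemma tau_sum: "k < d-1 \<Longrightarrow> (\<Sum>a<d. tau k a) = 0"
proof -
  assume k: "k < d-1"
  have "mtrace (t k) = (\<Sum>a<d. of_real (tau k a))"
    by (rule trace_eig) (use t_herm k eig_entry in auto)
  thus ?thesis using t_herm k by (metis of_real_eq_0_iff of_real_sum)
qed

lemma tau_orth: "k < d-1 \<Longrightarrow> l < d-1 \<Longrightarrow> (\<Sum>a<d. tau k a * tau l a) = (if k = l then 1 else 0)"
proof -
  assume k: "k < d-1" and l: "l < d-1"
  have Tk: "t k \<in> carrier_mat d d" and Tl: "t l \<in> carrier_mat d d" using t_herm k l by auto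
  have "mtrace (t k * t l) = (\<Sum>a<d. of_real (tau k a * tau l a))"
  proof (rule trace_eig)
    fix a x assume a: "a < d" and x: "x < d"
    have "(\<Sum>y<d. (t k * t l) $$ (x,y) * w a $ y) = (\<Sum>y<d. \<Sum>z<d. t k $$ (x,z) * t l $$ (z,y) * w a $ y)"
      using x by (auto intro!: sum.cong simp: mult_entry[OF Tk Tl] sum_distrib_right)
    also have "\<dots> = (\<Sum>z<d. t k $$ (x,z) * (\<Sum>y<d. t l $$ (z,y) * w a $ y))"
      by (subst sum.swap) (auto intro!: sum.cong simp: sum_distrib_left ac_simps)
    also have "\<dots> = (\<Sum>z<d. t k $$ (x,z) * (of_real (tau l a) * w a $ z))"
      by (auto intro!: sum.cong simp: eig_entry[OF l a])
    also have "\<dots> = of_real (tau l a) * (\<Sum>z<d. t k $$ (x,z) * w a $ z)"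
      by (auto simp: sum_distrib_left ac_simps)
    also have "\<dots> = of_real (tau k a * tau l a) * w a $ x"
      using eig_entry[OF k a x] by simp
    finally show "(\<Sum>y<d. (t k * t l) $$ (x,y) * w a $ y) = of_real (tau k a * tau l a) * w a $ x" .
  qed (use Tk Tl in auto)
  moreover have "(\<Sum>a<d. complex_of_real (tau k a * tau l a)) = complex_of_real (\<Sum>a<d. tau k a * tau l a)"
    by (simp only: of_real_sum)
  ultimately have "complex_of_real (\<Sum>a<d. tau k a * tau l a) = (if k = l then 1 else 0)"
    using t_orth k l by simp
  hence "Re (complex_of_real (\<Sum>a<d. tau k a * tau l a)) = Re (if k = l then 1 else 0)" by simp
  thus ?thesis by (simp del: of_real_sum of_real_mult)
qed


lemma pow_entry:
  assumes A: "A \<in> carrier_mat d d"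
    and le: "\<And>a y. a < d \<Longrightarrow> y < d \<Longrightarrow> (\<Sum>z<d. cnj (w a $ z) * A $$ (z,y)) = \<mu> a * cnj (w a $ y)"
  shows "x < d \<Longrightarrow> y < d \<Longrightarrow> (A ^\<^sub>m n) $$ (x,y) = (\<Sum>a<d. \<mu> a ^ n * (w a $ x * cnj (w a $ y)))"
proof (induction n arbitrary: x y)
  case 0
  then show ?case using A wcomplete[of x y] by simp
next
  case (Suc n)
  have P: "A ^\<^sub>m n \<in> carrier_mat d d" using A by simp
  have "(A ^\<^sub>m Suc n) $$ (x,y) = (\<Sum>z<d. (A ^\<^sub>m n) $$ (x,z) * A $$ (z,y))"
    using mult_entry[OF P A Suc.prems] by simp
  also have "\<dots> = (\<Sum>z<d. \<Sum>a<d. \<mu> a ^ n * w a $ x * (cnj (w a $ z) * A $$ (z,y)))"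
    by (rule sum.cong[OF refl]) (simp add: Suc.IH Suc.prems sum_distrib_right sum_distrib_left ac_simps)
  also have "\<dots> = (\<Sum>a<d. \<Sum>z<d. \<mu> a ^ n * w a $ x * (cnj (w a $ z) * A $$ (z,y)))"
    by (rule sum.swap)
  also have "\<dots> = (\<Sum>a<d. \<mu> a ^ n * w a $ x * (\<Sum>z<d. cnj (w a $ z) * A $$ (z,y)))"
    by (simp add: sum_distrib_left)
  also have "\<dots> = (\<Sum>a<d. \<mu> a ^ Suc n * (w a $ x * cnj (w a $ y)))"
    using Suc.prems by (auto intro!: sum.cong simp: le)
  finally show ?case .
qed

lemma mexp_entry:
  assumes A: "A \<in> carrier_mat d d"
    and le: "\<And>a y. a < d \<Longrightarrow> y < d \<Longrightarrow> (\<Sum>z<d. cnj (w a $ z) * A $$ (z,y)) = \<mu> a * cnj (w a $ y)"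
    and x: "x < d" and y: "y < d"
  shows "mexp A $$ (x,y) = (\<Sum>a<d. exp (\<mu> a) * (w a $ x * cnj (w a $ y)))"
proof -
  have "mexp A $$ (x,y) = (\<Sum>k. (A ^\<^sub>m k) $$ (x,y) / of_nat (fact k))"
    unfolding mexp_def using A x y by simp
  also have "\<dots> = (\<Sum>k. \<Sum>a<d. (\<mu> a ^ k /\<^sub>R fact k) * (w a $ x * cnj (w a $ y)))"
    by (rule suminf_cong) (auto simp: pow_entry[OF A le x y] sum_divide_distrib scaleR_conv_of_real
        intro!: sum.cong simp: field_simps)
  also have "\<dots> = (\<Sum>a<d. exp (\<mu> a) * (w a $ x * cnj (w a $ y)))"
    by (rule sums_unique[symmetric], rule sums_sum, rule sums_mult2, rule exp_converges)
  finally show ?thesis .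
qed

lemma mexp_eig:
  assumes A: "A \<in> carrier_mat d d"
    and le: "\<And>a y. a < d \<Longrightarrow> y < d \<Longrightarrow> (\<Sum>z<d. cnj (w a $ z) * A $$ (z,y)) = \<mu> a * cnj (w a $ y)"
    and b: "b < d" and x: "x < d"
  shows "(\<Sum>y<d. mexp A $$ (x,y) * w b $ y) = exp (\<mu> b) * w b $ x"
proof -
  have "(\<Sum>y<d. mexp A $$ (x,y) * w b $ y) = (\<Sum>y<d. \<Sum>a<d. exp (\<mu> a) * w a $ x * (cnj (w a $ y) * w b $ y))"
    by (rule sum.cong[OF refl]) (simp add: mexp_entry[OF A le x] sum_distrib_right sum_distrib_left ac_simps)
  also have "\<dots> = (\<Sum>a<d. \<Sum>y<d. exp (\<mu> a) * w a $ x * (cnj (w a $ y) * w b $ y))"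
    by (rule sum.swap)
  also have "\<dots> = (\<Sum>a<d. exp (\<mu> a) * w a $ x * (if a = b then 1 else 0))"
    by (auto intro!: sum.cong simp: sum_distrib_left[symmetric] worth b)
  also have "\<dots> = exp (\<mu> b) * w b $ x" using sum_delta_r[OF b] .
  finally show ?thesis .
qed

definition gen :: "(real \<Rightarrow> real) \<Rightarrow> (nat \<Rightarrow> real) \<Rightarrow> complex mat" where
  "gen fj \<theta> = mat d d (\<lambda>(a,b). \<i> * (\<Sum>k<d-1. complex_of_real (fj (\<theta> k)) * t k $$ (a,b)))"

lemma Ugate_eq: "Ugate d t fj \<theta> = mexp (gen fj \<theta>)"
  unfolding Ugate_def gen_def by simp

lemma gen_le:
  assumes a: "a < d" and y: "y < d"
  shows "(\<Sum>z<d. cnj (w a $ z) * gen fj \<theta> $$ (z,y))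
       = (\<i> * of_real (\<Sum>k<d-1. fj (\<theta> k) * tau k a)) * cnj (w a $ y)"
proof -
  have "(\<Sum>z<d. cnj (w a $ z) * gen fj \<theta> $$ (z,y))
      = (\<Sum>z<d. \<Sum>k<d-1. \<i> * of_real (fj (\<theta> k)) * (cnj (w a $ z) * t k $$ (z,y)))"
    unfolding gen_def using y by (auto intro!: sum.cong simp: sum_distrib_left ac_simps)
  also have "\<dots> = (\<Sum>k<d-1. \<Sum>z<d. \<i> * of_real (fj (\<theta> k)) * (cnj (w a $ z) * t k $$ (z,y)))"
    by (rule sum.swap)
  also have "\<dots> = (\<Sum>k<d-1. \<i> * of_real (fj (\<theta> k)) * (of_real (tau k a) * cnj (w a $ y)))"
    by (auto intro!: sum.cong simp: sum_distrib_left[symmetric] left_eig a y)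
  also have "\<dots> = (\<i> * of_real (\<Sum>k<d-1. fj (\<theta> k) * tau k a)) * cnj (w a $ y)"
    by (simp add: sum_distrib_left sum_distrib_right of_real_sum ac_simps)
  finally show ?thesis .
qed

lemma gen_carrier: "gen fj \<theta> \<in> carrier_mat d d"
  unfolding gen_def by simp

lemma Ugate_carrier: "Ugate d t fj \<theta> \<in> carrier_mat d d"
  unfolding Ugate_eq mexp_def gen_def by simp

lemma Ugate_eig:
  assumes b: "b < d" and x: "x < d"
  shows "(\<Sum>y<d. Ugate d t fj \<theta> $$ (x,y) * w b $ y)
       = exp (\<i> * of_real (\<Sum>k<d-1. fj (\<theta> k) * tau k b)) * w b $ x"
  unfolding Ugate_eq
  by (rule mexp_eig[OF gen_carrier gen_le b x])

definition phi :: "(nat \<Rightarrow> real \<Rightarrow> real) \<Rightarrow> nat \<Rightarrow> (nat \<Rightarrow> real) \<Rightarrow> nat \<Rightarrow> real" where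
  "phi f m \<theta> b = (\<Sum>j<m. \<Sum>k<d-1. f j (\<theta> k) * tau k b)"

lemma circuit_eig:
  "circuit d t f m \<theta> \<in> carrier_mat d d \<and>
   (\<forall>b<d. \<forall>x<d. (\<Sum>y<d. circuit d t f m \<theta> $$ (x,y) * w b $ y)
       = exp (\<i> * of_real (phi f m \<theta> b)) * w b $ x)"
proof (induction m)
  case 0
  show ?case by (auto simp: phi_def sum_delta_l2)
next
  case (Suc m)
  let ?C = "circuit d t f m \<theta>" and ?U = "Ugate d t (f m) \<theta>"
  have C: "?C \<in> carrier_mat d d" using Suc by simp
  have U: "?U \<in> carrier_mat d d" by (rule Ugate_carrier)
  have "(\<Sum>y<d. (?U * ?C) $$ (x,y) * w b $ y) = exp (\<i> * of_real (phi f (Suc m) \<theta> b)) * w b $ x"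
    if b: "b < d" and x: "x < d" for b x
  proof -
    have "(\<Sum>y<d. (?U * ?C) $$ (x,y) * w b $ y) = (\<Sum>y<d. \<Sum>z<d. ?U $$ (x,z) * (?C $$ (z,y) * w b $ y))"
      using x by (intro sum.cong[OF refl]) (simp add: mult_entry[OF U C] sum_distrib_right sum_distrib_left ac_simps)
    also have "\<dots> = (\<Sum>z<d. ?U $$ (x,z) * (\<Sum>y<d. ?C $$ (z,y) * w b $ y))"
      by (subst sum.swap) (simp add: sum_distrib_left)
    also have "\<dots> = (\<Sum>z<d. ?U $$ (x,z) * w b $ z) * exp (\<i> * of_real (phi f m \<theta> b))"
      using Suc b by (simp add: sum_distrib_right mult.assoc mult.commute[of "exp _"])
    also have "\<dots> = exp (\<i> * of_real (\<Sum>k<d-1. f m (\<theta> k) * tau k b)) * exp (\<i> * of_real (phi f m \<theta> b)) * w b $ x"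
      using Ugate_eig[OF b x] by simp
    also have "\<dots> = exp (\<i> * of_real (phi f (Suc m) \<theta> b)) * w b $ x"
      by (simp add: phi_def exp_add[symmetric] distrib_left add.commute)
    finally show ?thesis .
  qed
  then show ?case using U C by simp
qed

lemma psi_out_entry:
  assumes x: "x < d"
  shows "psi_out d n t w f \<theta> $ x
       = (\<Sum>a<d. exp (\<i> * of_real (phi f n \<theta> a)) * w a $ x) / of_real (sqrt (real d))"
proof -
  let ?C = "circuit d t f n \<theta>"
  have C: "?C \<in> carrier_mat d d" using circuit_eig by blast
  have S: "psi_sep d w \<in> carrier_vec d" unfolding psi_sep_def by simp
  have "psi_out d n t w f \<theta> $ x = (\<Sum>y<d. ?C $$ (x,y) * psi_sep d w $ y)"
    unfolding psi_out_def by (rule mult_vec_entry[OF C S x])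
  also have "\<dots> = (\<Sum>y<d. \<Sum>a<d. ?C $$ (x,y) * w a $ y) / of_real (sqrt (real d))"
    by (auto simp: psi_sep_def sum_divide_distrib sum_distrib_left intro!: sum.cong)
  also have "\<dots> = (\<Sum>a<d. \<Sum>y<d. ?C $$ (x,y) * w a $ y) / of_real (sqrt (real d))"
    by (subst sum.swap) simp
  also have "\<dots> = (\<Sum>a<d. exp (\<i> * of_real (phi f n \<theta> a)) * w a $ x) / of_real (sqrt (real d))"
    using circuit_eig x by auto
  finally show ?thesis .
qed

lemma psi_out_dim: "psi_out d n t w f \<theta> \<in> carrier_vec d"
  unfolding psi_out_def psi_sep_def using circuit_eig by (auto intro!: mult_mat_vec_carrier)

lemma rho_out_entry:
  "x < d \<Longrightarrow> y < d \<Longrightarrow> rho_out d n t w f \<theta> $$ (x,y)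
     = psi_out d n t w f \<theta> $ x * cnj (psi_out d n t w f \<theta> $ y)"
  unfolding rho_out_def proj_def by simp

lemma rho_out_carrier: "rho_out d n t w f \<theta> \<in> carrier_mat d d"
  unfolding rho_out_def proj_def by simp


lemma hvd_cong: "(f has_vector_derivative a) F \<Longrightarrow> a = b \<Longrightarrow> (f has_vector_derivative b) F"
  by simp

lemma phi_deriv:
  assumes df: "\<forall>i<n. f i differentiable (at (\<theta> j))" and j: "j < d-1"
  shows "((\<lambda>s. phi f n (\<theta>(j:=s)) a) has_real_derivative
           ((\<Sum>i<n. deriv (f i) (\<theta> j)) * tau j a)) (at (\<theta> j))"
proof -
  have "((\<lambda>s. phi f n (\<theta>(j:=s)) a) has_real_derivative
          (\<Sum>i<n. \<Sum>k<d-1. if k = j then deriv (f i) (\<theta> j) * tau k a else 0)) (at (\<theta> j))"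
    unfolding phi_def
  proof (rule DERIV_sum, rule DERIV_sum)
    fix i k assume i: "i \<in> {..<n}" and k: "k \<in> {..<d-1}"
    show "((\<lambda>s. f i ((\<theta>(j:=s)) k) * tau k a) has_real_derivative
            (if k = j then deriv (f i) (\<theta> j) * tau k a else 0)) (at (\<theta> j))"
    proof (cases "k = j")
      case True
      have "DERIV (f i) (\<theta> j) :> deriv (f i) (\<theta> j)"
        using df i DERIV_deriv_iff_real_differentiable by blast
      then show ?thesis using True by (simp add: DERIV_cmult_right)
    next
      case False
      then show ?thesis by simp
    qed
  qed
  moreover have "(\<Sum>i<n. \<Sum>k<d-1. if k = j then deriv (f i) (\<theta> j) * tau k a else 0)
      = (\<Sum>i<n. deriv (f i) (\<theta> j)) * tau j a"
    using j by (simp add: sum_distrib_right)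
  ultimately show ?thesis by simp
qed

definition cc :: "(nat \<Rightarrow> real \<Rightarrow> real) \<Rightarrow> nat \<Rightarrow> (nat \<Rightarrow> real) \<Rightarrow> nat \<Rightarrow> complex" where
  "cc f n \<theta> a = exp (\<i> * of_real (phi f n \<theta> a)) / of_real (sqrt (real d))"

definition VW :: "(nat \<Rightarrow> complex) \<Rightarrow> nat \<Rightarrow> complex" where
  "VW \<alpha> x = (\<Sum>a<d. \<alpha> a * w a $ x)"

lemma psi_VW: "x < d \<Longrightarrow> psi_out d n t w f \<theta> $ x = VW (cc f n \<theta>) x"
  unfolding VW_def cc_def by (simp add: psi_out_entry sum_divide_distrib)

lemma psi_deriv:
  assumes df: "\<forall>i<n. f i differentiable (at (\<theta> j))" and j: "j < d-1" and x: "x < d"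
  shows "((\<lambda>s. psi_out d n t w f (\<theta>(j:=s)) $ x) has_vector_derivative
     (\<i> * of_real (\<Sum>i<n. deriv (f i) (\<theta> j)) * VW (\<lambda>a. of_real (tau j a) * cc f n \<theta> a) x)) (at (\<theta> j))"
proof -
  let ?g = "\<Sum>i<n. deriv (f i) (\<theta> j)"
  have E: "((\<lambda>s. exp (\<i> * of_real (phi f n (\<theta>(j:=s)) a))) has_vector_derivative
      (\<i> * of_real (?g * tau j a) * exp (\<i> * of_real (phi f n \<theta> a)))) (at (\<theta> j))" for a
  proof -
    have h: "((\<lambda>s. \<i> * of_real (phi f n (\<theta>(j:=s)) a)) has_vector_derivative (\<i> * of_real (?g * tau j a))) (at (\<theta> j))"
      by (rule has_vector_derivative_mult_right, rule has_vector_derivative_of_real, rule phi_deriv[where f=f and n=n and \<theta>=\<theta> and j=j, OF df j])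
    from field_vector_diff_chain_at[OF h DERIV_exp] show ?thesis by (simp add: o_def)
  qed
  have H: "((\<lambda>s. (\<Sum>a<d. exp (\<i> * of_real (phi f n (\<theta>(j:=s)) a)) * w a $ x) / of_real (sqrt (real d)))
     has_vector_derivative
     ((\<Sum>a<d. \<i> * of_real (?g * tau j a) * exp (\<i> * of_real (phi f n \<theta> a)) * w a $ x) / of_real (sqrt (real d)))) (at (\<theta> j))"
    by (intro has_vector_derivative_divide has_vector_derivative_sum has_vector_derivative_mult_left E)
  moreover have Feq: "(\<lambda>s. psi_out d n t w f (\<theta>(j:=s)) $ x) = (\<lambda>s. (\<Sum>a<d. exp (\<i> * of_real (phi f n (\<theta>(j:=s)) a)) * w a $ x) / of_real (sqrt (real d)))"
    using x by (simp add: psi_out_entry)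
  moreover have Eq: "(\<Sum>a<d. \<i> * of_real (g * tau j a) * exp (\<i> * of_real (phi f n \<theta> a)) * w a $ x) / of_real (sqrt (real d))
      = \<i> * of_real g * VW (\<lambda>a. of_real (tau j a) * cc f n \<theta> a) x" for g :: real
    unfolding VW_def cc_def by (simp add: sum_divide_distrib sum_distrib_left ac_simps)
  show ?thesis unfolding Feq Eq[of ?g, symmetric] by (rule H)
qed

lemma rho_deriv:
  assumes df: "\<forall>i<n. f i differentiable (at (\<theta> j))" and j: "j < d-1" and x: "x < d" and y: "y < d"
  shows "((\<lambda>s. rho_out d n t w f (\<theta>(j:=s)) $$ (x,y)) has_vector_derivative
     (\<i> * of_real (\<Sum>i<n. deriv (f i) (\<theta> j)) *
        (VW (\<lambda>a. of_real (tau j a) * cc f n \<theta> a) x * cnj (VW (cc f n \<theta>) y)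
         - VW (cc f n \<theta>) x * cnj (VW (\<lambda>a. of_real (tau j a) * cc f n \<theta> a) y)))) (at (\<theta> j))"
proof -
  have "(\<lambda>s. rho_out d n t w f (\<theta>(j:=s)) $$ (x,y)) = (\<lambda>s. psi_out d n t w f (\<theta>(j:=s)) $ x * cnj (psi_out d n t w f (\<theta>(j:=s)) $ y))"
    using x y by (simp add: rho_out_entry)
  moreover have "((\<lambda>s. psi_out d n t w f (\<theta>(j:=s)) $ x * cnj (psi_out d n t w f (\<theta>(j:=s)) $ y)) has_vector_derivative
     (psi_out d n t w f (\<theta>(j:=\<theta> j)) $ x * cnj (\<i> * of_real (\<Sum>i<n. deriv (f i) (\<theta> j)) * VW (\<lambda>a. of_real (tau j a) * cc f n \<theta> a) y)
      + (\<i> * of_real (\<Sum>i<n. deriv (f i) (\<theta> j)) * VW (\<lambda>a. of_real (tau j a) * cc f n \<theta> a) x) * cnj (psi_out d n t w f (\<theta>(j:=\<theta> j)) $ y))) (at (\<theta> j))"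
    by (intro has_vector_derivative_mult has_vector_derivative_cnj psi_deriv df j x y)
  ultimately show ?thesis using x y by (simp add: psi_VW algebra_simps)
qed

lemma trace_deriv:
  assumes R: "\<And>s. R s \<in> carrier_mat d d" and M: "M \<in> carrier_mat d d"
    and D: "\<And>x y. x < d \<Longrightarrow> y < d \<Longrightarrow> ((\<lambda>s. R s $$ (x,y)) has_vector_derivative Dm x y) (at s0)"
  shows "((\<lambda>s. Re (mtrace (R s * M))) has_real_derivative Re (\<Sum>x<d. \<Sum>y<d. Dm x y * M $$ (y,x))) (at s0)"
proof -
  have tr: "mtrace (R s * M) = (\<Sum>x<d. \<Sum>y<d. R s $$ (x,y) * M $$ (y,x))" for s
  proof -
    have "mtrace (R s * M) = (\<Sum>x<d. (R s * M) $$ (x,x))" unfolding mtrace_def using R[of s] M by simp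
    also have "\<dots> = (\<Sum>x<d. \<Sum>y<d. R s $$ (x,y) * M $$ (y,x))"
      by (rule sum.cong[OF refl], rule mult_entry[OF R M]) auto
    finally show ?thesis .
  qed
  have "((\<lambda>s. \<Sum>x<d. \<Sum>y<d. R s $$ (x,y) * M $$ (y,x)) has_vector_derivative (\<Sum>x<d. \<Sum>y<d. Dm x y * M $$ (y,x))) (at s0)"
    by (intro has_vector_derivative_sum has_vector_derivative_mult_left D) auto
  from bounded_linear.has_vector_derivative[OF bounded_linear_Re this]
  show ?thesis unfolding tr has_real_derivative_iff_has_vector_derivative by simp
qed


definition ip :: "(nat \<Rightarrow> complex) \<Rightarrow> (nat \<Rightarrow> complex) \<Rightarrow> complex" where
  "ip u v = (\<Sum>x<d. cnj (u x) * v x)"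

lemma ip_VW: "ip (VW \<alpha>) (VW \<beta>) = (\<Sum>a<d. cnj (\<alpha> a) * \<beta> a)"
proof -
  have "ip (VW \<alpha>) (VW \<beta>) = (\<Sum>x<d. \<Sum>a<d. \<Sum>b<d. cnj (\<alpha> a) * \<beta> b * (cnj (w a $ x) * w b $ x))"
    unfolding ip_def VW_def by (simp add: sum_distrib_left sum_distrib_right ac_simps)
  also have "\<dots> = (\<Sum>a<d. \<Sum>b<d. \<Sum>x<d. cnj (\<alpha> a) * \<beta> b * (cnj (w a $ x) * w b $ x))"
    by (subst sum.swap) (rule sum.cong[OF refl], rule sum.swap)
  also have "\<dots> = (\<Sum>a<d. \<Sum>b<d. cnj (\<alpha> a) * \<beta> b * (if a = b then 1 else 0))"
    by (intro sum.cong refl) (simp add: sum_distrib_left[symmetric] worth)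
  also have "\<dots> = (\<Sum>a<d. cnj (\<alpha> a) * \<beta> a)"
    by (intro sum.cong refl) (simp add: sum_delta_l)
  finally show ?thesis .
qed

lemma ip_VWC:
  assumes hC: "\<forall>a<d. cnj (C a) * C a = 1 / of_nat d"
  shows "ip (VW (\<lambda>a. \<kappa> a * C a)) (VW (\<lambda>a. \<kappa>' a * C a)) = (\<Sum>a<d. cnj (\<kappa> a) * \<kappa>' a) / of_nat d"
proof -
  have "ip (VW (\<lambda>a. \<kappa> a * C a)) (VW (\<lambda>a. \<kappa>' a * C a)) = (\<Sum>a<d. cnj (\<kappa> a) * \<kappa>' a * (cnj (C a) * C a))"
    by (simp add: ip_VW ac_simps)
  also have "\<dots> = (\<Sum>a<d. cnj (\<kappa> a) * \<kappa>' a / of_nat d)"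
    using hC by (intro sum.cong refl) simp
  finally show ?thesis by (simp add: sum_divide_distrib)
qed

lemma bil:
  "(\<Sum>x<d. \<Sum>y<d. (P x * cnj (Q y)) * (e y * cnj (e x) / 2)) = ip e P * ip Q e / 2"
  unfolding ip_def by (simp add: sum_product sum_divide_distrib ac_simps)

lemma tr_expr:
  assumes R: "R \<in> carrier_mat d d" and M: "M \<in> carrier_mat d d"
  shows "mtrace (R * M) = (\<Sum>x<d. \<Sum>y<d. R $$ (x,y) * M $$ (y,x))"
proof -
  have "mtrace (R * M) = (\<Sum>x<d. (R * M) $$ (x,x))" unfolding mtrace_def using R M by simp
  also have "\<dots> = (\<Sum>x<d. \<Sum>y<d. R $$ (x,y) * M $$ (y,x))"
    by (rule sum.cong[OF refl], rule mult_entry[OF R M]) auto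
  finally show ?thesis .
qed

definition r1 :: "(nat \<Rightarrow> complex) \<Rightarrow> complex mat" where
  "r1 e = mat d d (\<lambda>(x,y). e x * cnj (e y) / 2)"

lemma r1_carrier: "r1 e \<in> carrier_mat d d" unfolding r1_def by simp

lemma r1_trace:
  assumes R: "R \<in> carrier_mat d d" and Re: "\<And>x y. x < d \<Longrightarrow> y < d \<Longrightarrow> R $$ (x,y) = P x * cnj (Q y)"
  shows "mtrace (R * r1 e) = ip e P * ip Q e / 2"
proof -
  have "mtrace (R * r1 e) = (\<Sum>x<d. \<Sum>y<d. (P x * cnj (Q y)) * (e y * cnj (e x) / 2))"
    unfolding tr_expr[OF R r1_carrier] by (intro sum.cong refl) (simp add: Re r1_def)
  also have "\<dots> = ip e P * ip Q e / 2" by (rule bil)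
  finally show ?thesis .
qed

lemma psd_r1: "psd d (r1 e)"
  unfolding psd_def
proof (intro conjI ballI)
  show "r1 e \<in> carrier_mat d d" by (rule r1_carrier)
  show "hermitian (r1 e)" unfolding hermitian_def
    by (auto simp: r1_def cadj_def intro!: eq_matI)
  fix v :: "complex vec" assume v: "v \<in> carrier_vec d"
  define z where "z = (\<Sum>x<d. cnj (v $ x) * e x)"
  have mv: "(r1 e *\<^sub>v v) $ x = (\<Sum>y<d. e x * cnj (e y) / 2 * v $ y)" if "x < d" for x
    using mult_vec_entry[OF r1_carrier v that] that by (simp add: r1_def)
  have "cinner v (r1 e *\<^sub>v v) = (\<Sum>x<d. cnj (v $ x) * (\<Sum>y<d. e x * cnj (e y) / 2 * v $ y))"
    unfolding cinner_def using v by (auto intro!: sum.cong simp: mv)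
  also have "\<dots> = (\<Sum>x<d. \<Sum>y<d. (cnj (v $ x) * e x) * (cnj (e y) * v $ y)) / 2"
    by (simp add: sum_distrib_left sum_divide_distrib ac_simps)
  also have "\<dots> = z * cnj z / 2"
  proof -
    have "cnj z = (\<Sum>y<d. cnj (e y) * v $ y)" unfolding z_def by (simp add: mult.commute)
    thus ?thesis unfolding z_def by (simp only: sum_product)
  qed
  finally have h: "cinner v (r1 e *\<^sub>v v) = z * cnj z / 2" .
  have "Re (cinner v (r1 e *\<^sub>v v)) = Re (z * cnj z / 2)" using arg_cong[where f=Re, OF h] .
  hence "Re (cinner v (r1 e *\<^sub>v v)) = Re (z * cnj z) / 2" by simp
  moreover have "Re (z * cnj z) \<ge> 0" unfolding complex_mult_cnj by simp
  ultimately show "0 \<le> Re (cinner v (r1 e *\<^sub>v v))" by linarith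
qed

lemma cc_norm: "a < d \<Longrightarrow> cnj (cc f n \<theta> a) * cc f n \<theta> a = 1 / of_nat d"
proof -
  have "cnj (exp (\<i> * of_real r)) * exp (\<i> * of_real r) = 1" for r :: real
    using cis_cnj[of r] cis_mult[of "-r" r] by (simp add: cis_conv_exp)
  moreover have "complex_of_real (sqrt (real d)) * complex_of_real (sqrt (real d)) = of_nat d"
    by (simp flip: of_real_mult)
  ultimately show ?thesis unfolding cc_def by (simp add: field_simps)
qed

lemma tau_complete:
  assumes a: "a < d" and b: "b < d"
  shows "(\<Sum>k<d-1. tau k a * tau k b) = (if a = b then 1 else 0) - 1 / real d"
proof -
  define V where "V i = (if i = 0 then vec d (\<lambda>_. complex_of_real (1 / sqrt (real d)))
                         else vec d (\<lambda>a. complex_of_real (tau (i - 1) a)))" for i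
  have dd: "d = Suc (d-1)" using d_pos by simp
  have car: "\<forall>i<d. V i \<in> carrier_vec d" by (auto simp: V_def)
  have sq: "(\<Sum>x<d. complex_of_real (1 / sqrt (real d)) * complex_of_real (1 / sqrt (real d))) = 1"
    using d_pos by (simp flip: of_real_mult)
  have orth: "\<forall>i<d. \<forall>j<d. cinner (V i) (V j) = (if i = j then 1 else 0)"
  proof (intro allI impI)
    fix i j assume i: "i < d" and j: "j < d"
    have ts: "(\<Sum>x<d. complex_of_real (tau k x)) = 0" if "k < d-1" for k
      using tau_sum[OF that] by (metis of_real_0 of_real_sum)
    have to: "(\<Sum>x<d. complex_of_real (tau k x) * complex_of_real (tau l x)) = (if k = l then 1 else 0)"
      if "k < d-1" "l < d-1" for k l
      using tau_orth[OF that] by (simp flip: of_real_mult of_real_sum)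
    show "cinner (V i) (V j) = (if i = j then 1 else 0)"
    proof (cases "i = 0"; cases "j = 0")
      assume "i = 0" "j = 0" thus ?thesis using sq by (simp add: cinner_def V_def)
    next
      assume "i = 0" "j \<noteq> 0"
      thus ?thesis using j ts[of "j-1"] by (simp add: cinner_def V_def sum_distrib_left[symmetric] sum_divide_distrib[symmetric])
    next
      assume "i \<noteq> 0" "j = 0"
      thus ?thesis using i ts[of "i-1"] by (simp add: cinner_def V_def sum_distrib_right[symmetric] sum_divide_distrib[symmetric])
    next
      assume "i \<noteq> 0" "j \<noteq> 0"
      hence "(i - 1 = j - 1) = (i = j)" by arith
      thus ?thesis using i j to[of "i-1" "j-1"] \<open>i \<noteq> 0\<close> \<open>j \<noteq> 0\<close> by (simp add: cinner_def V_def)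
    qed
  qed
  have "(\<Sum>i<d. V i $ a * cnj (V i $ b)) = (if a = b then 1 else 0)"
    by (rule complete[OF car orth a b])
  also have "(\<Sum>i<d. V i $ a * cnj (V i $ b)) = V 0 $ a * cnj (V 0 $ b) + (\<Sum>k<d-1. V (Suc k) $ a * cnj (V (Suc k) $ b))"
    by (subst dd, subst sum.lessThan_Suc_shift) simp
  also have "\<dots> = complex_of_real (1 / real d + (\<Sum>k<d-1. tau k a * tau k b))"
    using a b by (simp add: V_def of_real_sum flip: of_real_mult)
  finally have "complex_of_real (1 / real d + (\<Sum>k<d-1. tau k a * tau k b)) = (if a = b then 1 else 0)" .
  hence "Re (complex_of_real (1 / real d + (\<Sum>k<d-1. tau k a * tau k b))) = Re (if a = b then 1 else 0)" by simp
  hence h: "1 / real d + (\<Sum>k<d-1. tau k a * tau k b) = Re (if a = b then 1 else 0)"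
    by (simp del: of_real_sum of_real_mult of_real_add)
  have "Re (if a = b then 1 else 0 :: complex) = (if a = b then 1 else 0)" by simp
  with h show ?thesis by linarith
qed


lemma lin2: "(\<Sum>y<m. c * (A * p y - B * q y)) = (c::complex) * (A * (\<Sum>y<m. p y) - B * (\<Sum>y<m. q y))"
  by (simp add: sum_subtractf sum_distrib_left right_diff_distrib mult.assoc)

lemma lin3: "(\<Sum>x<m. c x * (h * (p x * q + r x))) = (h::complex) * ((\<Sum>x<m. c x * p x) * q + (\<Sum>x<m. c x * r x))"
  by (simp add: sum.distrib sum_distrib_left sum_distrib_right algebra_simps)

lemma ip_cnj: "ip u v = cnj (ip v u)"
  unfolding ip_def by (simp add: mult.commute)

lemma lam_psi:
  fixes \<rho> L :: "complex mat" and \<psi> \<xi> :: "nat \<Rightarrow> complex" and g :: real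
  assumes R: "\<rho> \<in> carrier_mat d d" and L: "L \<in> carrier_mat d d"
    and Rent: "\<And>x y. x < d \<Longrightarrow> y < d \<Longrightarrow> \<rho> $$ (x,y) = \<psi> x * cnj (\<psi> y)"
    and n1: "ip \<psi> \<psi> = 1" and o1: "ip \<psi> \<xi> = 0"
    and S: "\<And>x y. x < d \<Longrightarrow> y < d \<Longrightarrow> (1/2) * ((\<rho> * L + L * \<rho>) $$ (x,y))
              = \<i> * of_real g * (\<xi> x * cnj (\<psi> y) - \<psi> x * cnj (\<xi> y))"
    and x: "x < d"
  shows "(\<Sum>y<d. L $$ (x,y) * \<psi> y) = 2 * \<i> * of_real g * \<xi> x"
proof -
  define u where "u x = (\<Sum>y<d. L $$ (x,y) * \<psi> y)" for x
  define q where "q = (\<Sum>z<d. cnj (\<psi> z) * u z)"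
  have o2: "ip \<xi> \<psi> = 0" using o1 ip_cnj[of \<xi> \<psi>] by simp
  have RL: "\<rho> * L \<in> carrier_mat d d" and LR: "L * \<rho> \<in> carrier_mat d d" using R L by auto
  have dims: "dim_row L = d" "dim_col L = d" "dim_row \<rho> = d" "dim_col \<rho> = d" using R L by auto
  have E1: "(1/2) * (\<psi> x * q + u x) = \<i> * of_real g * \<xi> x" if x: "x < d" for x
  proof -
    have a: "(\<Sum>y<d. (\<rho> * L) $$ (x,y) * \<psi> y) = \<psi> x * q"
    proof -
      have "(\<Sum>y<d. (\<rho> * L) $$ (x,y) * \<psi> y) = (\<Sum>y<d. \<Sum>z<d. \<psi> x * (cnj (\<psi> z) * (L $$ (z,y) * \<psi> y)))"
        by (intro sum.cong refl) (simp add: mult_entry[OF R L x] Rent x sum_distrib_right sum_distrib_left ac_simps)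
      also have "\<dots> = (\<Sum>z<d. \<Sum>y<d. \<psi> x * (cnj (\<psi> z) * (L $$ (z,y) * \<psi> y)))"
        by (rule sum.swap)
      also have "\<dots> = \<psi> x * q" unfolding q_def u_def by (simp only: sum_distrib_left)
      finally show ?thesis .
    qed
    have b: "(\<Sum>y<d. (L * \<rho>) $$ (x,y) * \<psi> y) = u x"
    proof -
      have "(\<Sum>y<d. (L * \<rho>) $$ (x,y) * \<psi> y) = (\<Sum>y<d. u x * (cnj (\<psi> y) * \<psi> y))"
        by (intro sum.cong refl) (simp add: mult_entry[OF L R x] Rent x u_def sum_distrib_right sum_distrib_left ac_simps)
      also have "\<dots> = u x * ip \<psi> \<psi>" unfolding ip_def by (simp add: sum_distrib_left)
      finally show ?thesis using n1 by simp
    qed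
    have "(\<Sum>y<d. (1/2) * ((\<rho> * L + L * \<rho>) $$ (x,y)) * \<psi> y)
        = (1/2) * ((\<Sum>y<d. (\<rho> * L) $$ (x,y) * \<psi> y) + (\<Sum>y<d. (L * \<rho>) $$ (x,y) * \<psi> y))"
    proof -
      have "(\<Sum>y<d. (1/2) * ((\<rho> * L + L * \<rho>) $$ (x,y)) * \<psi> y)
          = (\<Sum>y<d. (1/2) * ((\<rho> * L) $$ (x,y) * \<psi> y) + (1/2) * ((L * \<rho>) $$ (x,y) * \<psi> y))"
        by (intro sum.cong refl) (use L R x dims in \<open>simp add: algebra_simps\<close>)
      thus ?thesis by (simp add: sum.distrib sum_distrib_left[symmetric] sum_divide_distrib algebra_simps)
    qed
    also have "\<dots> = (1/2) * (\<psi> x * q + u x)" using a b by simp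
    finally have lhs: "(\<Sum>y<d. (1/2) * ((\<rho> * L + L * \<rho>) $$ (x,y)) * \<psi> y) = (1/2) * (\<psi> x * q + u x)" .
    have "(\<Sum>y<d. (1/2) * ((\<rho> * L + L * \<rho>) $$ (x,y)) * \<psi> y)
        = (\<Sum>y<d. \<i> * of_real g * (\<xi> x * (cnj (\<psi> y) * \<psi> y) - \<psi> x * (cnj (\<xi> y) * \<psi> y)))"
      by (intro sum.cong refl) (subst S[OF x], simp_all add: algebra_simps)
    also have "\<dots> = \<i> * of_real g * (\<xi> x * ip \<psi> \<psi> - \<psi> x * ip \<xi> \<psi>)"
      unfolding ip_def by (rule lin2)
    also have "\<dots> = \<i> * of_real g * \<xi> x" using n1 o2 by simp
    finally show ?thesis using lhs by simp
  qed
  have "(\<Sum>x<d. cnj (\<psi> x) * ((1/2) * (\<psi> x * q + u x))) = (1/2) * (ip \<psi> \<psi> * q + q)"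
    unfolding ip_def q_def[symmetric] by (subst q_def, rule lin3)
  also have "(\<Sum>x<d. cnj (\<psi> x) * ((1/2) * (\<psi> x * q + u x))) = (\<Sum>x<d. cnj (\<psi> x) * (\<i> * of_real g * \<xi> x))"
    by (intro sum.cong refl) (subst E1, simp_all)
  also have "\<dots> = \<i> * of_real g * ip \<psi> \<xi>" unfolding ip_def by (simp add: sum_distrib_left ac_simps)
  finally have "q = 0" using n1 o1 by simp
  with E1[OF x] show ?thesis unfolding u_def by simp
qed

lemma sld_val:
  fixes \<rho> Lj Lk :: "complex mat" and \<psi> :: "nat \<Rightarrow> complex"
  assumes R: "\<rho> \<in> carrier_mat d d" and Lj: "Lj \<in> carrier_mat d d" and Lk: "Lk \<in> carrier_mat d d"
    and hk: "hermitian Lk"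
    and Rent: "\<And>x y. x < d \<Longrightarrow> y < d \<Longrightarrow> \<rho> $$ (x,y) = \<psi> x * cnj (\<psi> y)"
    and uj: "\<And>x. x < d \<Longrightarrow> (\<Sum>y<d. Lj $$ (x,y) * \<psi> y) = Uj x"
    and uk: "\<And>x. x < d \<Longrightarrow> (\<Sum>y<d. Lk $$ (x,y) * \<psi> y) = Uk x"
  shows "mtrace (Lj * \<rho> * Lk) = (\<Sum>x<d. Uj x * cnj (Uk x))"
proof -
  have LR: "Lj * \<rho> \<in> carrier_mat d d" using Lj R by auto
  have e1: "(Lj * \<rho>) $$ (x,z) = Uj x * cnj (\<psi> z)" if "x < d" "z < d" for x z
  proof -
    have "(Lj * \<rho>) $$ (x,z) = (\<Sum>y<d. Lj $$ (x,y) * \<psi> y) * cnj (\<psi> z)"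
      by (simp add: mult_entry[OF Lj R that] Rent that sum_distrib_right sum_distrib_left ac_simps)
    thus ?thesis using uj that by simp
  qed
  have e2: "(\<Sum>z<d. cnj (\<psi> z) * Lk $$ (z,x)) = cnj (Uk x)" if x: "x < d" for x
  proof -
    have "(\<Sum>z<d. cnj (\<psi> z) * Lk $$ (z,x)) = cnj (\<Sum>z<d. Lk $$ (x,z) * \<psi> z)"
      by (simp add: herm_entry[OF hk Lk _ x] mult.commute)
    thus ?thesis using uk x by simp
  qed
  have "mtrace (Lj * \<rho> * Lk) = (\<Sum>x<d. \<Sum>z<d. (Lj * \<rho>) $$ (x,z) * Lk $$ (z,x))"
    by (rule tr_expr[OF LR Lk])
  also have "\<dots> = (\<Sum>x<d. Uj x * (\<Sum>z<d. cnj (\<psi> z) * Lk $$ (z,x)))"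
    by (intro sum.cong refl) (simp add: e1 sum_distrib_left ac_simps)
  also have "\<dots> = (\<Sum>x<d. Uj x * cnj (Uk x))"
    by (intro sum.cong refl) (simp add: e2)
  finally show ?thesis .
qed

lemma kap_sum1:
  "(\<Sum>a<d. cnj (complex_of_real (P a) + \<i> * complex_of_real (Q a)) * complex_of_real (r a))
     = complex_of_real (\<Sum>a<d. P a * r a) - \<i> * complex_of_real (\<Sum>a<d. Q a * r a)"
  by (simp add: algebra_simps sum_subtractf sum_distrib_left)

lemma kap_sum2:
  "(\<Sum>a<d. cnj (complex_of_real (r a)) * (complex_of_real (P a) + \<i> * complex_of_real (Q a)))
     = complex_of_real (\<Sum>a<d. P a * r a) + \<i> * complex_of_real (\<Sum>a<d. Q a * r a)"
  by (simp add: algebra_simps sum.distrib sum_distrib_left)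


lemma bil2: "(\<Sum>x<d. \<Sum>y<d. (c * (A x * cnj (B y) - P x * cnj (Q y))) * (e y * cnj (e x) / 2))
   = c * (ip e A * ip B e / 2 - ip e P * ip Q e / 2)"
proof -
  have "(\<Sum>x<d. \<Sum>y<d. (c * (A x * cnj (B y) - P x * cnj (Q y))) * (e y * cnj (e x) / 2))
     = c * ((\<Sum>x<d. \<Sum>y<d. (A x * cnj (B y)) * (e y * cnj (e x) / 2)) - (\<Sum>x<d. \<Sum>y<d. (P x * cnj (Q y)) * (e y * cnj (e x) / 2)))"
    by (simp add: sum_subtractf sum_distrib_left algebra_simps)
  also have "\<dots> = c * (ip e A * ip B e / 2 - ip e P * ip Q e / 2)" by (simp only: bil)
  finally show ?thesis .
qed

definition bet :: real where "bet = 1 / sqrt (real (d - 1))"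
definition sg :: "nat \<Rightarrow> real" where "sg m = (if even m then 1 else -1)"
definition kap :: "nat \<Rightarrow> nat \<Rightarrow> complex" where
  "kap m a = complex_of_real bet + \<i> * complex_of_real (sg m * sqrt (real d) * tau (m div 2) a)"
definition ee :: "(nat \<Rightarrow> real \<Rightarrow> real) \<Rightarrow> nat \<Rightarrow> (nat \<Rightarrow> real) \<Rightarrow> nat \<Rightarrow> nat \<Rightarrow> complex" where
  "ee f n \<theta> m = VW (\<lambda>a. kap m a * cc f n \<theta> a)"
definition MM :: "(nat \<Rightarrow> real \<Rightarrow> real) \<Rightarrow> nat \<Rightarrow> (nat \<Rightarrow> real) \<Rightarrow> nat \<Rightarrow> complex mat" where
  "MM f n \<theta> m = r1 (ee f n \<theta> m)"
definition xi :: "(nat \<Rightarrow> real \<Rightarrow> real) \<Rightarrow> nat \<Rightarrow> (nat \<Rightarrow> real) \<Rightarrow> nat \<Rightarrow> nat \<Rightarrow> complex" where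
  "xi f n \<theta> j = VW (\<lambda>a. complex_of_real (tau j a) * cc f n \<theta> a)"
definition gam :: "(nat \<Rightarrow> real \<Rightarrow> real) \<Rightarrow> nat \<Rightarrow> (nat \<Rightarrow> real) \<Rightarrow> nat \<Rightarrow> real" where
  "gam f n \<theta> j = (\<Sum>i<n. deriv (f i) (\<theta> j))"

context
  fixes f :: "nat \<Rightarrow> real \<Rightarrow> real" and n :: nat and \<theta> :: "nat \<Rightarrow> real"
begin

abbreviation "C \<equiv> cc f n \<theta>"
abbreviation "\<psi> \<equiv> VW (cc f n \<theta>)"

lemma hC: "\<forall>a<d. cnj (C a) * C a = 1 / of_nat d"
  using cc_norm by blast

lemma ip_pp: "ip \<psi> \<psi> = 1"
  using ip_VWC[OF hC, of "\<lambda>_. 1" "\<lambda>_. 1"] d_pos by simp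

lemma ip_px: "j < d-1 \<Longrightarrow> ip \<psi> (xi f n \<theta> j) = 0"
  using ip_VWC[OF hC, of "\<lambda>_. 1" "\<lambda>a. complex_of_real (tau j a)"] tau_sum[of j]
  unfolding xi_def by (simp flip: of_real_sum)

lemma ip_xp: "j < d-1 \<Longrightarrow> ip (xi f n \<theta> j) \<psi> = 0"
  using ip_px ip_cnj by (metis complex_cnj_zero)

lemma ip_xx: "j < d-1 \<Longrightarrow> k < d-1 \<Longrightarrow> ip (xi f n \<theta> k) (xi f n \<theta> j) = (if k = j then 1 else 0) / of_nat d"
proof -
  assume j: "j < d-1" and k: "k < d-1"
  have "ip (xi f n \<theta> k) (xi f n \<theta> j) = complex_of_real (\<Sum>a<d. tau k a * tau j a) / of_nat d"
    using ip_VWC[OF hC, of "\<lambda>a. complex_of_real (tau k a)" "\<lambda>a. complex_of_real (tau j a)"]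
    unfolding xi_def by (simp add: of_real_sum)
  thus ?thesis using tau_orth[OF k j] by (simp add: of_real_sum)
qed

lemma ip_ep:
  assumes m: "m < 2*(d-1)"
  shows "ip (ee f n \<theta> m) \<psi> = complex_of_real bet"
proof -
  have md: "m div 2 < d-1" using m by simp
  have "ip (ee f n \<theta> m) \<psi> = (\<Sum>a<d. cnj (kap m a) * complex_of_real 1) / of_nat d"
    using ip_VWC[OF hC, of "kap m" "\<lambda>_. 1"] unfolding ee_def by simp
  also have "\<dots> = (complex_of_real (\<Sum>a<d. bet * 1) - \<i> * complex_of_real (\<Sum>a<d. sg m * sqrt (real d) * tau (m div 2) a * 1)) / of_nat d"
    unfolding kap_def by (subst kap_sum1) simp
  also have "\<dots> = complex_of_real bet"
  proof -
    have "(\<Sum>a<d. sg m * sqrt (real d) * tau (m div 2) a * 1) = sg m * sqrt (real d) * (\<Sum>a<d. tau (m div 2) a)"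
      by (simp add: sum_distrib_left)
    then show ?thesis using tau_sum[OF md] d_pos by simp
  qed
  finally show ?thesis .
qed

lemma ip_pe: "m < 2*(d-1) \<Longrightarrow> ip \<psi> (ee f n \<theta> m) = complex_of_real bet"
  using ip_ep ip_cnj by (metis complex_cnj_complex_of_real)

lemma ip_ex:
  assumes m: "m < 2*(d-1)" and j: "j < d-1"
  shows "ip (ee f n \<theta> m) (xi f n \<theta> j) = - \<i> * complex_of_real (sg m * sqrt (real d) * (if m div 2 = j then 1 else 0)) / of_nat d"
proof -
  have md: "m div 2 < d-1" using m by simp
  have "ip (ee f n \<theta> m) (xi f n \<theta> j) = (\<Sum>a<d. cnj (kap m a) * complex_of_real (tau j a)) / of_nat d"
    using ip_VWC[OF hC, of "kap m" "\<lambda>a. complex_of_real (tau j a)"] unfolding ee_def xi_def by simp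
  also have "\<dots> = (complex_of_real (\<Sum>a<d. bet * tau j a) - \<i> * complex_of_real (\<Sum>a<d. sg m * sqrt (real d) * tau (m div 2) a * tau j a)) / of_nat d"
    unfolding kap_def by (subst kap_sum1) simp
  also have "\<dots> = - \<i> * complex_of_real (sg m * sqrt (real d) * (if m div 2 = j then 1 else 0)) / of_nat d"
  proof -
    have "(\<Sum>a<d. sg m * sqrt (real d) * tau (m div 2) a * tau j a) = sg m * sqrt (real d) * (\<Sum>a<d. tau (m div 2) a * tau j a)"
      by (simp add: sum_distrib_left ac_simps)
    moreover have "(\<Sum>a<d. bet * tau j a) = bet * (\<Sum>a<d. tau j a)" by (simp add: sum_distrib_left)
    ultimately show ?thesis using tau_sum[OF j] tau_orth[OF md j] by simp
  qed
  finally show ?thesis .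
qed

lemma ip_xe:
  assumes m: "m < 2*(d-1)" and j: "j < d-1"
  shows "ip (xi f n \<theta> j) (ee f n \<theta> m) = \<i> * complex_of_real (sg m * sqrt (real d) * (if m div 2 = j then 1 else 0)) / of_nat d"
  using ip_ex[OF m j] ip_cnj[of "xi f n \<theta> j" "ee f n \<theta> m"] by simp

lemma rho_ent: "x < d \<Longrightarrow> y < d \<Longrightarrow> rho_out d n t w f \<theta> $$ (x,y) = \<psi> x * cnj (\<psi> y)"
  by (simp add: rho_out_entry psi_VW)

lemma prob_val:
  assumes m: "m < 2*(d-1)"
  shows "outcome_prob (rho_out d n t w f) (MM f n \<theta>) m \<theta> = bet^2 / 2"
proof -
  have "mtrace (rho_out d n t w f \<theta> * MM f n \<theta> m) = ip (ee f n \<theta> m) \<psi> * ip \<psi> (ee f n \<theta> m) / 2"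
    unfolding MM_def by (rule r1_trace[OF rho_out_carrier rho_ent])
  also have "\<dots> = complex_of_real (bet^2 / 2)" using ip_ep[OF m] ip_pe[OF m] by (simp add: power2_eq_square)
  finally have X: "mtrace (rho_out d n t w f \<theta> * MM f n \<theta> m) = complex_of_real (bet^2 / 2)" .
  show ?thesis unfolding outcome_prob_def X by (simp only: Re_complex_of_real)
qed

lemma pprob_val:
  assumes m: "m < 2*(d-1)" and j: "j < d-1" and df: "\<forall>i<n. f i differentiable (at (\<theta> j))"
  shows "((\<lambda>s. outcome_prob (rho_out d n t w f) (MM f n \<theta>) m (\<theta>(j:=s))) has_real_derivative
           (gam f n \<theta> j * bet * sg m * sqrt (real d) * (if m div 2 = j then 1 else 0) / real d)) (at (\<theta> j))"
proof -
  let ?e = "ee f n \<theta> m" and ?x = "xi f n \<theta> j" and ?c = "\<i> * complex_of_real (gam f n \<theta> j)"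
  have D: "((\<lambda>s. rho_out d n t w f (\<theta>(j:=s)) $$ (x,y)) has_vector_derivative
      (?c * (?x x * cnj (\<psi> y) - \<psi> x * cnj (?x y)))) (at (\<theta> j))" if "x < d" "y < d" for x y
    using rho_deriv[where f=f and n=n and \<theta>=\<theta> and j=j, OF df j that] unfolding xi_def gam_def .
  have H: "((\<lambda>s. Re (mtrace (rho_out d n t w f (\<theta>(j:=s)) * r1 ?e))) has_real_derivative
     Re (\<Sum>x<d. \<Sum>y<d. (?c * (?x x * cnj (\<psi> y) - \<psi> x * cnj (?x y))) * r1 ?e $$ (y,x))) (at (\<theta> j))"
    by (rule trace_deriv[OF rho_out_carrier r1_carrier D])
  have E1: "(\<Sum>x<d. \<Sum>y<d. (?c * (?x x * cnj (\<psi> y) - \<psi> x * cnj (?x y))) * r1 ?e $$ (y,x))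
      = (\<Sum>x<d. \<Sum>y<d. (?c * (?x x * cnj (\<psi> y) - \<psi> x * cnj (?x y))) * (?e y * cnj (?e x) / 2))"
    by (intro sum.cong refl) (simp add: r1_def)
  have E2: "(\<Sum>x<d. \<Sum>y<d. (?c * (?x x * cnj (\<psi> y) - \<psi> x * cnj (?x y))) * (?e y * cnj (?e x) / 2)) = ?c * (ip ?e ?x * ip \<psi> ?e / 2 - ip ?e \<psi> * ip ?x ?e / 2)"
    by (rule bil2)
  have E3: "Re (?c * (ip ?e ?x * ip \<psi> ?e / 2 - ip ?e \<psi> * ip ?x ?e / 2))
      = gam f n \<theta> j * bet * sg m * sqrt (real d) * (if m div 2 = j then 1 else 0) / real d"
    unfolding ip_ex[OF m j] ip_xe[OF m j] ip_ep[OF m] ip_pe[OF m]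
    by (simp add: field_simps)
  show ?thesis unfolding outcome_prob_def MM_def using H unfolding E1 E2 E3 .
qed


lemma alg1:
  fixes b D s r gj gk A B :: real
  assumes "b \<noteq> 0" "D \<noteq> 0" "s * s = 1" "r * r = D"
  shows "(gj * b * s * r * A / D) * (gk * b * s * r * B / D) / (b^2 / 2) = 2 * gj * gk * (A * B) / D"
proof -
  have "(gj * b * s * r * A / D) * (gk * b * s * r * B / D) / (b^2 / 2)
      = 2 * gj * gk * (A * B) * (s * s) * (r * r) * (b * b) / (D * D * (b * b))"
    using assms(1,2) by (simp add: field_simps power2_eq_square)
  also have "\<dots> = 2 * gj * gk * (A * B) / D" using assms by (simp add: field_simps)
  finally show ?thesis .
qed

lemma sum4: "(\<Sum>x<m. (2 * \<i> * complex_of_real g * p x) * cnj (2 * \<i> * complex_of_real h * q x))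
    = complex_of_real (4 * g * h) * (\<Sum>x<m. cnj (q x) * p x)"
proof -
  have t: "(2 * \<i> * complex_of_real g * a) * cnj (2 * \<i> * complex_of_real h * b) = complex_of_real (4 * g * h) * (cnj b * a)" for a b
  proof -
    have "cnj (2 * \<i> * complex_of_real h * b) = - (2 * \<i> * complex_of_real h * cnj b)" by simp
    hence "(2 * \<i> * complex_of_real g * a) * cnj (2 * \<i> * complex_of_real h * b)
        = - (4 * (\<i> * \<i>) * complex_of_real g * complex_of_real h * (cnj b * a))" by (simp add: ac_simps)
    thus ?thesis by simp
  qed
  show ?thesis by (simp only: t sum_distrib_left)
qed

lemma kpair:
  assumes rr: "r * r = D"
  shows "(complex_of_real \<beta> + \<i> * complex_of_real (1 * r * u)) * cnj (complex_of_real \<beta> + \<i> * complex_of_real (1 * r * v)) / 2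
   + (complex_of_real \<beta> + \<i> * complex_of_real (-1 * r * u)) * cnj (complex_of_real \<beta> + \<i> * complex_of_real (-1 * r * v)) / 2
   = complex_of_real (\<beta>^2 + D * (u * v))"
  unfolding rr[symmetric] by (simp add: complex_eq_iff field_simps power2_eq_square)

lemma restr:
  "(\<Sum>m<N. (\<Sum>a<d. \<alpha> m a * W a) * cnj (\<Sum>b<d. \<alpha> m b * V b) / 2)
   = (\<Sum>a<d. \<Sum>b<d. (\<Sum>m<N. \<alpha> m a * cnj (\<alpha> m b) / 2) * (W a * cnj (V b :: complex)))"
proof -
  have "(\<Sum>m<N. (\<Sum>a<d. \<alpha> m a * W a) * cnj (\<Sum>b<d. \<alpha> m b * V b) / 2)
      = (\<Sum>m<N. \<Sum>a<d. \<Sum>b<d. \<alpha> m a * cnj (\<alpha> m b) / 2 * (W a * cnj (V b)))"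
    by (intro sum.cong refl) (simp add: sum_product sum_divide_distrib ac_simps)
  also have "\<dots> = (\<Sum>a<d. \<Sum>m<N. \<Sum>b<d. \<alpha> m a * cnj (\<alpha> m b) / 2 * (W a * cnj (V b)))"
    by (rule sum.swap)
  also have "\<dots> = (\<Sum>a<d. \<Sum>b<d. \<Sum>m<N. \<alpha> m a * cnj (\<alpha> m b) / 2 * (W a * cnj (V b)))"
    by (intro sum.cong refl) (rule sum.swap)
  also have "\<dots> = (\<Sum>a<d. \<Sum>b<d. (\<Sum>m<N. \<alpha> m a * cnj (\<alpha> m b) / 2) * (W a * cnj (V b)))"
    by (simp add: sum_distrib_right)
  finally show ?thesis .
qed

lemma dbl: "2 * x * y * c / D + 2 * x * y * c / D = 4 * x * y * c / (D::real)"
  by (cases "D = 0") (simp_all add: field_simps)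

lemma delta_sum:
  assumes j: "j < (N::nat)"
  shows "(\<Sum>l<N. 4 * x * y * (if l = j \<and> l = k then 1 else 0) / D) = 4 * x * y * (if j = k then 1 else 0) / (D::real)"
proof -
  have "(\<Sum>l<N. 4 * x * y * (if l = j \<and> l = k then 1 else 0) / D) = (\<Sum>l<N. if l = j then 4 * x * y * (if j = k then 1 else 0) / D else 0)"
    by (rule sum.cong) auto
  also have "\<dots> = 4 * x * y * (if j = k then 1 else 0) / D" using j by (subst sum.delta) auto
  finally show ?thesis .
qed

lemma sld_eq:
  assumes SLD: "is_SLD d (d-1) (rho_out d n t w f) lam \<theta>"
    and df: "\<forall>i<n. \<forall>x. f i differentiable (at x)"
    and j: "j < d-1" and k: "k < d-1"
  shows "sld_info (rho_out d n t w f) lam \<theta> j k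
       = 4 * gam f n \<theta> j * gam f n \<theta> k * (if j = k then 1 else 0) / real d"
proof -
  let ?\<rho> = "rho_out d n t w f \<theta>"
  have U: "(\<Sum>y<d. lam i $$ (x,y) * \<psi> y) = 2 * \<i> * complex_of_real (gam f n \<theta> i) * xi f n \<theta> i x"
    if i: "i < d-1" and x: "x < d" for i x
  proof -
    have L: "lam i \<in> carrier_mat d d" and H: "\<And>a b. a < d \<Longrightarrow> b < d \<Longrightarrow>
        ((\<lambda>s. rho_out d n t w f (\<theta>(i := s)) $$ (a,b)) has_vector_derivative
         ((1/2) * ((?\<rho> * lam i + lam i * ?\<rho>) $$ (a,b)))) (at (\<theta> i))"
      using SLD i unfolding is_SLD_def by auto
    have dfi: "\<forall>i'<n. f i' differentiable (at (\<theta> i))" using df by blast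
    have S: "(1/2) * ((?\<rho> * lam i + lam i * ?\<rho>) $$ (a,b))
        = \<i> * complex_of_real (gam f n \<theta> i) * (xi f n \<theta> i a * cnj (\<psi> b) - \<psi> a * cnj (xi f n \<theta> i b))"
      if "a < d" "b < d" for a b
      using vector_derivative_unique_at[OF H[OF that] rho_deriv[where f=f and n=n and \<theta>=\<theta> and j=i, OF dfi i that]]
      unfolding xi_def gam_def .
    show ?thesis
      by (rule lam_psi[OF rho_out_carrier L rho_ent ip_pp ip_px[OF i] S x])
  qed
  have Lj: "lam j \<in> carrier_mat d d" and Lk: "lam k \<in> carrier_mat d d" and hk: "hermitian (lam k)"
    using SLD j k unfolding is_SLD_def by auto
  have "mtrace (lam j * ?\<rho> * lam k)
      = (\<Sum>x<d. (2 * \<i> * complex_of_real (gam f n \<theta> j) * xi f n \<theta> j x) * cnj (2 * \<i> * complex_of_real (gam f n \<theta> k) * xi f n \<theta> k x))"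
    by (rule sld_val[OF rho_out_carrier Lj Lk hk rho_ent U[OF j] U[OF k]])
  also have "\<dots> = complex_of_real (4 * gam f n \<theta> j * gam f n \<theta> k) * ip (xi f n \<theta> k) (xi f n \<theta> j)"
    unfolding ip_def by (rule sum4)
  also have "\<dots> = complex_of_real (4 * gam f n \<theta> j * gam f n \<theta> k * (if j = k then 1 else 0) / real d)"
    using ip_xx[OF j k] by (cases "j = k") simp_all
  finally have X: "mtrace (lam j * ?\<rho> * lam k) = complex_of_real (4 * gam f n \<theta> j * gam f n \<theta> k * (if j = k then 1 else 0) / real d)" .
  show ?thesis unfolding sld_info_def X by (simp only: Re_complex_of_real)
qed

lemma fisher_eq:
  assumes d2: "2 \<le> d" and df: "\<forall>i<n. \<forall>x. f i differentiable (at x)"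
    and j: "j < d-1" and k: "k < d-1"
  shows "fisher_info (rho_out d n t w f) (2*(d-1)) (MM f n \<theta>) \<theta> j k
       = 4 * gam f n \<theta> j * gam f n \<theta> k * (if j = k then 1 else 0) / real d"
proof -
  let ?\<rho> = "rho_out d n t w f" and ?N = "2*(d-1)"
  have bpos: "bet > 0" unfolding bet_def using d2 by simp
  have b2: "bet^2 / 2 > 0" using bpos by simp
  have dfj: "\<forall>i<n. f i differentiable (at (\<theta> l))" for l using df by blast
  have pp: "partial_prob ?\<rho> (MM f n \<theta>) m \<theta> l
      = gam f n \<theta> l * bet * sg m * sqrt (real d) * (if m div 2 = l then 1 else 0) / real d"
    if "m < ?N" "l < d-1" for m l
    unfolding partial_prob_def by (rule DERIV_imp_deriv, rule pprob_val[OF that dfj])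
  have set: "{m. m < ?N \<and> outcome_prob ?\<rho> (MM f n \<theta>) m \<theta> > 0} = {..<?N}"
  proof -
    have "outcome_prob ?\<rho> (MM f n \<theta>) m \<theta> > 0" if "m < ?N" for m unfolding prob_val[OF that] by (rule b2)
    thus ?thesis by auto
  qed
  have sg2: "sg m * sg m = 1" for m unfolding sg_def by simp
  have sd: "sqrt (real d) * sqrt (real d) = real d" by simp
  have tm: "partial_prob ?\<rho> (MM f n \<theta>) m \<theta> j * partial_prob ?\<rho> (MM f n \<theta>) m \<theta> k / outcome_prob ?\<rho> (MM f n \<theta>) m \<theta>
      = 2 * gam f n \<theta> j * gam f n \<theta> k * (if m div 2 = j \<and> m div 2 = k then 1 else 0) / real d"
    if m: "m < ?N" for m
  proof -
    have "partial_prob ?\<rho> (MM f n \<theta>) m \<theta> j * partial_prob ?\<rho> (MM f n \<theta>) m \<theta> k / outcome_prob ?\<rho> (MM f n \<theta>) m \<theta>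
       = (gam f n \<theta> j * bet * sg m * sqrt (real d) * (if m div 2 = j then 1 else 0) / real d)
         * (gam f n \<theta> k * bet * sg m * sqrt (real d) * (if m div 2 = k then 1 else 0) / real d) / (bet^2 / 2)"
      by (simp only: pp[OF m j] pp[OF m k] prob_val[OF m])
    also have "\<dots> = 2 * gam f n \<theta> j * gam f n \<theta> k * ((if m div 2 = j then 1 else 0) * (if m div 2 = k then 1 else 0)) / real d"
      by (rule alg1[OF _ _ sg2 sd]) (use bpos d2 in auto)
    also have "\<dots> = 2 * gam f n \<theta> j * gam f n \<theta> k * (if m div 2 = j \<and> m div 2 = k then 1 else 0) / real d"
      by simp
    finally show ?thesis .
  qed
  have "fisher_info ?\<rho> ?N (MM f n \<theta>) \<theta> j k
     = (\<Sum>m<?N. 2 * gam f n \<theta> j * gam f n \<theta> k * (if m div 2 = j \<and> m div 2 = k then 1 else 0) / real d)"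
    unfolding fisher_info_def set by (intro sum.cong refl) (simp add: tm)
  also have "\<dots> = (\<Sum>l<d-1. 4 * gam f n \<theta> j * gam f n \<theta> k * (if l = j \<and> l = k then 1 else 0) / real d)"
  proof (subst pair_sum, rule sum.cong[OF refl])
    fix l :: nat
    have h: "(2*l) div 2 = l" "(2*l+1) div 2 = l" by auto
    show "2 * gam f n \<theta> j * gam f n \<theta> k * (if (2*l) div 2 = j \<and> (2*l) div 2 = k then 1 else 0) / real d
        + 2 * gam f n \<theta> j * gam f n \<theta> k * (if (2*l+1) div 2 = j \<and> (2*l+1) div 2 = k then 1 else 0) / real d
        = 4 * gam f n \<theta> j * gam f n \<theta> k * (if l = j \<and> l = k then 1 else 0) / real d"
      unfolding h by (rule dbl)
  qed
  also have "\<dots> = 4 * gam f n \<theta> j * gam f n \<theta> k * (if j = k then 1 else 0) / real d"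
    by (rule delta_sum[OF j])
  finally show ?thesis .
qed


lemma povm:
  assumes d2: "2 \<le> d"
  shows "is_povm d (2*(d-1)) (MM f n \<theta>)"
  unfolding is_povm_def
proof (intro conjI allI impI)
  fix m assume "m < 2*(d-1)"
  show "psd d (MM f n \<theta> m)" unfolding MM_def by (rule psd_r1)
next
  fix x y assume x: "x < d" and y: "y < d"
  have bb: "(real (d-1)) * bet^2 = 1" unfolding bet_def using d2 by (simp add: power_divide)
  have K: "(\<Sum>m<2*(d-1). kap m a * cnj (kap m b) / 2) = complex_of_real (real d * (if a = b then 1 else 0))"
    if a: "a < d" and b: "b < d" for a b
  proof -
    have "(\<Sum>m<2*(d-1). kap m a * cnj (kap m b) / 2) = (\<Sum>l<d-1. complex_of_real (bet^2 + real d * (tau l a * tau l b)))"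
    proof (subst pair_sum, rule sum.cong[OF refl])
      fix l :: nat
      have h: "(2*l) div 2 = l" "(2*l+1) div 2 = l" "sg (2*l) = 1" "sg (2*l+1) = -1" by (auto simp: sg_def)
      show "kap (2*l) a * cnj (kap (2*l) b) / 2 + kap (2*l+1) a * cnj (kap (2*l+1) b) / 2
          = complex_of_real (bet^2 + real d * (tau l a * tau l b))"
        unfolding kap_def h by (rule kpair) simp
    qed
    also have "\<dots> = complex_of_real (real (d-1) * bet^2 + real d * (\<Sum>l<d-1. tau l a * tau l b))"
      by (simp add: of_real_sum[symmetric] sum.distrib sum_distrib_left)
    also have "\<dots> = complex_of_real (real d * (if a = b then 1 else 0))"
      unfolding bb tau_complete[OF a b] using d_pos by (simp add: field_simps)
    finally show ?thesis .
  qed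
  have "(\<Sum>m<2*(d-1). MM f n \<theta> m $$ (x,y))
      = (\<Sum>m<2*(d-1). (\<Sum>a<d. (kap m a * C a) * w a $ x) * cnj (\<Sum>b<d. (kap m b * C b) * w b $ y) / 2)"
    unfolding MM_def r1_def ee_def VW_def using x y by simp
  also have "\<dots> = (\<Sum>a<d. \<Sum>b<d. (\<Sum>m<2*(d-1). (kap m a * C a) * cnj (kap m b * C b) / 2) * (w a $ x * cnj (w b $ y)))"
    by (rule restr)
  also have "\<dots> = (\<Sum>a<d. \<Sum>b<d. (C a * cnj (C b) * complex_of_real (real d * (if a = b then 1 else 0))) * (w a $ x * cnj (w b $ y)))"
  proof (intro sum.cong refl)
    fix a b assume a: "a \<in> {..<d}" and b: "b \<in> {..<d}"
    have "(\<Sum>m<2*(d-1). (kap m a * C a) * cnj (kap m b * C b) / 2) = C a * cnj (C b) * (\<Sum>m<2*(d-1). kap m a * cnj (kap m b) / 2)"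
      by (simp add: sum_distrib_left ac_simps)
    thus "(\<Sum>m<2*(d-1). (kap m a * C a) * cnj (kap m b * C b) / 2) * (w a $ x * cnj (w b $ y))
        = (C a * cnj (C b) * complex_of_real (real d * (if a = b then 1 else 0))) * (w a $ x * cnj (w b $ y))"
      using K a b by simp
  qed
  also have "\<dots> = (\<Sum>a<d. w a $ x * cnj (w a $ y))"
  proof (rule sum.cong[OF refl])
    fix a assume a: "a \<in> {..<d}"
    have "(\<Sum>b<d. (C a * cnj (C b) * complex_of_real (real d * (if a = b then 1 else 0))) * (w a $ x * cnj (w b $ y)))
        = (\<Sum>b<d. if b = a then (C a * cnj (C a) * of_nat d) * (w a $ x * cnj (w a $ y)) else 0)"
      by (rule sum.cong) auto
    also have "\<dots> = (C a * cnj (C a) * of_nat d) * (w a $ x * cnj (w a $ y))" using a by simp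
    also have "\<dots> = w a $ x * cnj (w a $ y)" using hC a d_pos by (simp add: mult.commute[of "C a"])
    finally show "(\<Sum>b<d. (C a * cnj (C b) * complex_of_real (real d * (if a = b then 1 else 0))) * (w a $ x * cnj (w b $ y)))
        = w a $ x * cnj (w a $ y)" .
  qed
  also have "\<dots> = 1\<^sub>m d $$ (x,y)" using wcomplete[OF x y] x y by simp
  finally show "(\<Sum>m<2*(d-1). MM f n \<theta> m $$ (x,y)) = 1\<^sub>m d $$ (x,y)" .
qed

end

end


lemma psd_one1: "psd 1 (1\<^sub>m 1)"
  unfolding psd_def
proof (intro conjI ballI)
  show "1\<^sub>m 1 \<in> carrier_mat 1 1" by simp
  show "hermitian (1\<^sub>m 1 :: complex mat)" unfolding hermitian_def cadj_def by (auto intro!: eq_matI)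
  fix v :: "complex vec" assume v: "v \<in> carrier_vec 1"
  have "cinner v (1\<^sub>m 1 *\<^sub>v v) = cnj (v $ 0) * v $ 0" unfolding cinner_def using v by simp
  also have "\<dots> = complex_of_real ((Re (v $ 0))\<^sup>2 + (Im (v $ 0))\<^sup>2)"
    using complex_mult_cnj[of "v $ 0"] by (simp add: mult.commute)
  finally show "0 \<le> Re (cinner v (1\<^sub>m 1 *\<^sub>v v))" by simp
qed

theorem proposition4p5:
  fixes d n :: nat and t :: "nat \<Rightarrow> complex mat" and w :: "nat \<Rightarrow> complex vec"
    and f :: "nat \<Rightarrow> real \<Rightarrow> real" and \<theta> :: "nat \<Rightarrow> real"
  assumes d_pos: "0 < d"
    and t_herm: "\<forall>k<d-1. t k \<in> carrier_mat d d \<and> hermitian (t k) \<and> mtrace (t k) = 0"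
    and t_orth: "\<forall>k<d-1. \<forall>l<d-1. mtrace (t k * t l) = (if k = l then 1 else 0)"
    and t_comm: "\<forall>k<d-1. \<forall>l<d-1. t k * t l = t l * t k"
    and w_carrier: "\<forall>a<d. w a \<in> carrier_vec d"
    and w_orthonormal: "\<forall>a<d. \<forall>b<d. cinner (w a) (w b) = (if a = b then 1 else 0)"
    and w_eigen: "\<forall>k<d-1. \<forall>a<d. \<exists>c. t k *\<^sub>v w a = c \<cdot>\<^sub>v w a"
    and f_deriv: "\<forall>j<n. \<forall>x. f j differentiable (at x) \<and> deriv (f j) x > 0"
    and f_range: "\<forall>k<d-1. 0 \<le> (\<Sum>j<n. f j (\<theta> k)) \<and> (\<Sum>j<n. f j (\<theta> k)) \<le> pi"
  shows "\<exists>N M. is_povm d N M \<and>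
           (\<forall>m<N. \<forall>j<d-1. (\<lambda>s. outcome_prob (rho_out d n t w f) M m (\<theta>(j := s)))
                               differentiable (at (\<theta> j))) \<and>
           (\<forall>lam. is_SLD d (d-1) (rho_out d n t w f) lam \<theta> \<longrightarrow>
              (\<forall>j<d-1. \<forall>k<d-1.
                 fisher_info (rho_out d n t w f) N M \<theta> j k = sld_info (rho_out d n t w f) lam \<theta> j k))"
proof -
  interpret qs d t w
    using d_pos t_herm t_orth w_carrier w_orthonormal w_eigen by unfold_locales auto
  have df: "\<forall>i<n. \<forall>x. f i differentiable (at x)" using f_deriv by blast
  show ?thesis
  proof (cases "d = 1")
    case True
    have P: "is_povm d 1 (\<lambda>_. 1\<^sub>m 1)"
      unfolding is_povm_def using True psd_one1 by auto
    show ?thesis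
      by (rule exI[of _ 1], rule exI[of _ "\<lambda>_. 1\<^sub>m 1"]) (use P True in auto)
  next
    case False
    hence d2: "2 \<le> d" using d_pos by simp
    show ?thesis
    proof (rule exI[of _ "2*(d-1)"], rule exI[of _ "MM f n \<theta>"], intro conjI allI impI)
      show "is_povm d (2*(d-1)) (MM f n \<theta>)" by (rule povm[OF d2])
    next
      fix m j assume m: "m < 2*(d-1)" and j: "j < d-1"
      have dfj: "\<forall>i<n. f i differentiable (at (\<theta> j))" using df by blast
      from pprob_val[where f=f and n=n and \<theta>=\<theta>, OF m j dfj]
      show "(\<lambda>s. outcome_prob (rho_out d n t w f) (MM f n \<theta>) m (\<theta>(j := s))) differentiable (at (\<theta> j))"
        unfolding has_real_derivative_iff_has_vector_derivative by (rule differentiableI_vector)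
    next
      fix lam j k assume S: "is_SLD d (d-1) (rho_out d n t w f) lam \<theta>" and j: "j < d-1" and k: "k < d-1"
      show "fisher_info (rho_out d n t w f) (2*(d-1)) (MM f n \<theta>) \<theta> j k = sld_info (rho_out d n t w f) lam \<theta> j k"
        using fisher_eq[where f=f and n=n and \<theta>=\<theta>, OF d2 df j k] sld_eq[where f=f and n=n and \<theta>=\<theta>, OF S df j k] by simp
    qed
  qed
qed

end
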